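(* Let $z\in L_T$ and suppose that \[h_T(z)=\sum_{j=1}^n q\frac{|y_{j-1}-y_j|}{\xi_T(y_j)}\] for distinct points $y_0,\dots,y_n\in L_T$ with $y_0=z$ and $y_n=0$. Then for any $k\in\{1,\dots,n\}$, \[h_T(y_k)=\sum_{j=k+1}^n q\frac{|y_{j-1}-y_j|}{\xi_T(y_j)}.\] Moreover, the sequence $(\xi_T(y_j))_{j\ge1}$ is non-increasing.
   Context: $(\xi(z))_{z\in\mathbb{Z}^d}$ is a positive potential (i.i.d. Pareto with parameter $\alpha>d$, i.e. $\mathbb{P}(\xi(z)>x)=x^{-\alpha}$ for $x\ge1$). $|\cdot|$ is the $\ell_1$-norm. $q=d/(\alpha-d)$, $a(T)=(T/\log T)^q$, $r(T)=(T/\log T)^{q+1}$, $L_T=\{z\in\mathbb{R}^d:r(T)z\in\mathbb{Z}^d\}$, $\xi_T(z)=\xi(r(T)z)/a(T)$. For $z\in L_T$, \[h_T(z)=\inf\Big\{\sum_{j=1}^n q\frac{|y_{j-1}-y_j|}{\xi_T(y_j)}: n\ge0,\ y_0,\dots,y_n\in L_T,\ y_0=z,\ y_n=0\Big\}.\] *)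

theory Defs
  imports "HOL-Analysis.Analysis"
begin

text \<open>Dimension d = CARD('d); points of R^d are real^'d, of Z^d are int^'d.
  alpha is the Pareto parameter, xi the potential on Z^d.\<close>

definition qexp :: "real \<Rightarrow> nat \<Rightarrow> real" where
  "qexp alpha d = real d / (alpha - real d)"

definition aT :: "real \<Rightarrow> nat \<Rightarrow> real \<Rightarrow> real" where
  "aT alpha d T = (T / ln T) powr (qexp alpha d)"

definition rT :: "real \<Rightarrow> nat \<Rightarrow> real \<Rightarrow> real" where
  "rT alpha d T = (T / ln T) powr (qexp alpha d + 1)"

definition l1 :: "real^'d \<Rightarrow> real" where
  "l1 x = (\<Sum>i\<in>UNIV. \<bar>x $ i\<bar>)"

definition LT :: "real \<Rightarrow> real \<Rightarrow> (real^'d) set" where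
  "LT alpha T = {z. \<forall>i. rT alpha CARD('d) T * z $ i \<in> \<int>}"

text \<open>xi_T(z) = xi(r(T) z) / a(T); on L_T the floor is exact.\<close>
definition xiT :: "real \<Rightarrow> (int^'d \<Rightarrow> real) \<Rightarrow> real \<Rightarrow> real^'d \<Rightarrow> real" where
  "xiT alpha xi T z =
     xi (\<chi> i. \<lfloor>rT alpha CARD('d) T * z $ i\<rfloor>) / aT alpha CARD('d) T"

definition path_cost :: "real \<Rightarrow> (int^'d \<Rightarrow> real) \<Rightarrow> real \<Rightarrow> (nat \<Rightarrow> real^'d) \<Rightarrow> nat \<Rightarrow> nat \<Rightarrow> real" where
  "path_cost alpha xi T y k n =
     (\<Sum>j\<in>{k+1..n}. qexp alpha CARD('d) * l1 (y (j - 1) - y j) / xiT alpha xi T (y j))"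

definition hT :: "real \<Rightarrow> (int^'d \<Rightarrow> real) \<Rightarrow> real \<Rightarrow> real^'d \<Rightarrow> real" where
  "hT alpha xi T z = Inf {path_cost alpha xi T y 0 n | y n.
      (\<forall>j\<le>n. y j \<in> LT alpha T) \<and> y 0 = z \<and> y n = 0}"

end

theory Submission
  imports Defs
begin

lemma l1_nonneg: "l1 x \<ge> 0"
  unfolding l1_def by (simp add: sum_nonneg)

lemma l1_tri: "l1 (x + y) \<le> l1 x + l1 y"
  unfolding l1_def by (simp add: sum.distrib[symmetric] sum_mono abs_triangle_ineq)

lemma l1_pos: "x \<noteq> 0 \<Longrightarrow> l1 x > 0"
proof -
  assume "x \<noteq> 0"
  then obtain i where "x $ i \<noteq> 0" by (metis vec_eq_iff zero_index)
  have "l1 x \<noteq> 0"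
  proof
    assume "l1 x = 0"
    hence "\<forall>i\<in>UNIV. \<bar>x $ i\<bar> = 0" unfolding l1_def
      by (subst sum_nonneg_eq_0_iff[symmetric]) auto
    with \<open>x $ i \<noteq> 0\<close> show False by auto
  qed
  with l1_nonneg[of x] show ?thesis by linarith
qed

lemma aT_pos: "T > 1 \<Longrightarrow> aT alpha d T > 0"
  unfolding aT_def using ln_gt_zero[of T] by simp

lemma xiT_pos: "\<forall>x. xi x > 0 \<Longrightarrow> T > 1 \<Longrightarrow> xiT alpha xi T z > 0"
  unfolding xiT_def using aT_pos[of T alpha] by simp

lemma q_pos: "alpha > real CARD('d::finite) \<Longrightarrow> qexp alpha CARD('d) > 0"
  unfolding qexp_def by (simp add: divide_pos_pos)

lemma pc_nonneg:
  fixes xi :: "int^'d \<Rightarrow> real" and y :: "nat \<Rightarrow> real^'d"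
  assumes "alpha > real CARD('d)" "\<forall>x. xi x > 0" "T > 1"
  shows "path_cost alpha xi T y k n \<ge> 0"
  unfolding path_cost_def
  using q_pos[OF assms(1)] xiT_pos[OF assms(2,3)] l1_nonneg
  by (intro sum_nonneg divide_nonneg_pos mult_nonneg_nonneg) (auto simp: less_imp_le)

lemma pc_split:
  fixes y :: "nat \<Rightarrow> real^'d"
  assumes "k \<le> m" "m \<le> n"
  shows "path_cost alpha xi T y k n = path_cost alpha xi T y k m + path_cost alpha xi T y m n"
proof -
  have "{k+1..n} = {k+1..m} \<union> {m+1..n}" using assms by auto
  thus ?thesis unfolding path_cost_def
    by (simp add: sum.union_disjoint ivl_disj_int)
qed

lemma pc_shift:
  fixes y :: "nat \<Rightarrow> real^'d"
  shows "path_cost alpha xi T (\<lambda>j. y (j + k)) 0 m = path_cost alpha xi T y k (m + k)"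
proof -
  have "path_cost alpha xi T y k (m + k) =
    (\<Sum>j\<in>{1+k..m+k}. qexp alpha CARD('d) * l1 (y (j - 1) - y j) / xiT alpha xi T (y j))"
    unfolding path_cost_def by (simp add: add.commute)
  also have "\<dots> = (\<Sum>j\<in>{1..m}. qexp alpha CARD('d) * l1 (y (j + k - 1) - y (j+k)) / xiT alpha xi T (y (j+k)))"
    by (rule sum.shift_bounds_cl_nat_ivl)
  also have "\<dots> = path_cost alpha xi T (\<lambda>j. y (j + k)) 0 m"
    unfolding path_cost_def by (intro sum.cong) auto
  finally show ?thesis by simp
qed

lemma pc_concat:
  fixes y w :: "nat \<Rightarrow> real^'d"
  assumes "w 0 = y k"
  shows "path_cost alpha xi T (\<lambda>j. if j \<le> k then y j else w (j - k)) 0 (k + m)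
       = path_cost alpha xi T y 0 k + path_cost alpha xi T w 0 m"
proof -
  define v where "v = (\<lambda>j. if j \<le> k then y j else w (j - k))"
  have "path_cost alpha xi T v 0 (k + m) = path_cost alpha xi T v 0 k + path_cost alpha xi T v k (m + k)"
    by (subst pc_split[of 0 k]) (auto simp: add.commute)
  moreover have "path_cost alpha xi T v 0 k = path_cost alpha xi T y 0 k"
    unfolding path_cost_def v_def by (intro sum.cong) auto
  moreover have "(\<lambda>j. v (j + k)) = w" using assms unfolding v_def by (auto intro!: ext)
  hence "path_cost alpha xi T v k (m + k) = path_cost alpha xi T w 0 m"
    using pc_shift[of alpha xi T v k m] by simp
  ultimately show ?thesis unfolding v_def by simp
qed

lemma hT_le:
  fixes xi :: "int^'d \<Rightarrow> real" and w :: "nat \<Rightarrow> real^'d"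
  assumes "alpha > real CARD('d)" "\<forall>x. xi x > 0" "T > 1"
    and "\<forall>j\<le>m. w j \<in> LT alpha T" "w 0 = p" "w m = 0"
  shows "hT alpha xi T p \<le> path_cost alpha xi T w 0 m"
  unfolding hT_def
proof (rule cInf_lower)
  show "path_cost alpha xi T w 0 m \<in> {path_cost alpha xi T y 0 n | y n.
      (\<forall>j\<le>n. y j \<in> LT alpha T) \<and> y 0 = p \<and> y n = 0}" using assms by blast
  show "bdd_below {path_cost alpha xi T y 0 n | y n.
      (\<forall>j\<le>n. y j \<in> LT alpha T) \<and> y 0 = p \<and> y n = 0}"
    using pc_nonneg[OF assms(1-3)] by (intro bdd_belowI[of _ 0]) auto
qed

lemma hT_ge:
  fixes xi :: "int^'d \<Rightarrow> real" and w :: "nat \<Rightarrow> real^'d"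
  assumes "\<forall>j\<le>m. w j \<in> LT alpha T" "w 0 = p" "w m = 0"
    and "\<And>(u::nat \<Rightarrow> real^'d) n. \<forall>j\<le>n. u j \<in> LT alpha T \<Longrightarrow> u 0 = p \<Longrightarrow> u n = 0 \<Longrightarrow> c \<le> path_cost alpha xi T u 0 n"
  shows "c \<le> hT alpha xi T p"
  unfolding hT_def
  by (rule cInf_greatest) (use assms in blast)+

theorem lemma3p3:
  fixes alpha T :: real and xi :: "int^'d \<Rightarrow> real"
    and z :: "real^'d" and y :: "nat \<Rightarrow> real^'d" and n :: nat
  assumes alpha: "alpha > real CARD('d)"
    and xi_pos: "\<forall>x. xi x > 0"
    and T: "T > 1"
    and z: "z \<in> LT alpha T"
    and yL: "\<forall>j\<le>n. y j \<in> LT alpha T"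
    and dist: "inj_on y {0..n}"
    and y0: "y 0 = z" and yn: "y n = 0"
    and opt: "hT alpha xi T z = path_cost alpha xi T y 0 n"
  shows "(\<forall>k\<in>{1..n}. hT alpha xi T (y k) = path_cost alpha xi T y k n)
       \<and> (\<forall>j. 1 \<le> j \<and> j < n \<longrightarrow> xiT alpha xi T (y (j + 1)) \<le> xiT alpha xi T (y j))"
proof -
  have tailL: "\<forall>j\<le>n - k. y (j + k) \<in> LT alpha T" if "k \<le> n" for k using yL that by auto
  have gen: "hT alpha xi T (y k) = path_cost alpha xi T y k n" if k: "k \<le> n" for k
  proof (rule antisym)
    have "hT alpha xi T (y k) \<le> path_cost alpha xi T (\<lambda>j. y (j + k)) 0 (n - k)"
      by (rule hT_le[OF alpha xi_pos T tailL[OF k]]) (use k yn in auto)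
    thus "hT alpha xi T (y k) \<le> path_cost alpha xi T y k n"
      using pc_shift[of alpha xi T y k "n-k"] k by simp
    show "path_cost alpha xi T y k n \<le> hT alpha xi T (y k)"
    proof (rule hT_ge[OF tailL[OF k]])
      show "y (0 + k) = y k" by simp
      show "y (n - k + k) = 0" using k yn by simp
      fix u :: "nat \<Rightarrow> real^'d" and m assume uL: "\<forall>j\<le>m. u j \<in> LT alpha T" and u0: "u 0 = y k" and um: "u m = 0"
      define v where "v = (\<lambda>j. if j \<le> k then y j else u (j - k))"
      have "hT alpha xi T z \<le> path_cost alpha xi T v 0 (k + m)"
        by (rule hT_le[OF alpha xi_pos T]) (use uL u0 yL k um y0 in \<open>auto simp: v_def\<close>)
      also have "\<dots> = path_cost alpha xi T y 0 k + path_cost alpha xi T u 0 m"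
        unfolding v_def by (rule pc_concat[of u y k, OF u0])
      finally show "path_cost alpha xi T y k n \<le> path_cost alpha xi T u 0 m"
        using opt pc_split[of 0 k n alpha xi T y] k by simp
    qed
  qed
  have part2: "xiT alpha xi T (y (j + 1)) \<le> xiT alpha xi T (y j)" if j: "1 \<le> j" "j < n" for j
  proof -
    define a where "a = y (j - 1)"
    define b1 where "b1 = y j"
    define b2 where "b2 = y (j + 1)"
    define q where "q = qexp alpha CARD('d)"
    define x1 where "x1 = xiT alpha xi T b1"
    define x2 where "x2 = xiT alpha xi T b2"
    define R where "R = path_cost alpha xi T y (j + 1) n"
    have q: "q > 0" using q_pos[OF alpha] q_def by simp
    have x1: "x1 > 0" and x2: "x2 > 0" using xiT_pos[OF xi_pos T] x1_def x2_def by auto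
    have "path_cost alpha xi T y (j - 1) n = path_cost alpha xi T y (j - 1) (j+1) + R"
      unfolding R_def by (rule pc_split) (use j in auto)
    moreover have "{j - 1 + 1..j + 1} = {j, j+1}" using j by auto
    hence "path_cost alpha xi T y (j - 1) (j+1) = q * l1 (a - b1) / x1 + q * l1 (b1 - b2) / x2"
      unfolding path_cost_def a_def b1_def b2_def q_def x1_def x2_def using j by simp
    ultimately have eq: "hT alpha xi T a = q * l1 (a - b1) / x1 + q * l1 (b1 - b2) / x2 + R"
      using gen[of "j - 1"] j a_def by simp
    define y' where "y' = (\<lambda>i::nat. if i = 0 then a else b2)"
    define w where "w = (\<lambda>i. y (i + (j + 1)))"
    define v where "v = (\<lambda>i. if i \<le> 1 then y' i else w (i - 1))"
    have yS: "n \<le> Suc j \<Longrightarrow> y (Suc j) = 0" using j yn by (metis Suc_leI le_antisym)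
    have "hT alpha xi T a \<le> path_cost alpha xi T v 0 (1 + (n - (j+1)))"
      by (rule hT_le[OF alpha xi_pos T])
        (use yL j yn yS in \<open>auto simp: v_def y'_def w_def a_def b2_def\<close>)
    also have "\<dots> = path_cost alpha xi T y' 0 1 + path_cost alpha xi T w 0 (n - (j+1))"
      unfolding v_def by (rule pc_concat) (simp add: w_def y'_def b2_def)
    also have "path_cost alpha xi T w 0 (n - (j+1)) = R"
      unfolding w_def R_def using pc_shift[of alpha xi T y "j+1" "n - (j+1)"] j by simp
    also have "path_cost alpha xi T y' 0 1 = q * l1 (a - b2) / x2"
      unfolding path_cost_def y'_def q_def x2_def by simp
    finally have "q * l1 (a - b1) / x1 + q * l1 (b1 - b2) / x2 \<le> q * l1 (a - b2) / x2"
      using eq by simp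
    also have "q * l1 (a - b2) / x2 \<le> q * (l1 (a - b1) + l1 (b1 - b2)) / x2"
      using l1_tri[of "a - b1" "b1 - b2"] q x2
      by (intro divide_right_mono mult_left_mono) auto
    finally have "q * l1 (a - b1) / x1 \<le> q * l1 (a - b1) / x2"
      by (simp add: add_divide_distrib distrib_left)
    moreover have "a \<noteq> b1"
    proof
      assume "a = b1"
      hence "j - 1 = j" using inj_on_eq_iff[OF dist, of "j - 1" j] j unfolding a_def b1_def by simp
      thus False using j by simp
    qed
    hence "l1 (a - b1) > 0" by (intro l1_pos) simp
    ultimately have "(q * l1 (a - b1)) * inverse x1 \<le> (q * l1 (a - b1)) * inverse x2"
      by (simp add: divide_inverse)
    hence "inverse x1 \<le> inverse x2"
      using q \<open>l1 (a - b1) > 0\<close> by (simp add: mult_le_cancel_left_pos)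
    hence "x2 \<le> x1" using x1 x2 by simp
    thus ?thesis using x1_def x2_def b1_def b2_def by simp
  qed
  show ?thesis using gen part2 by auto
qed

end
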